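(* Let $0<\varepsilon<1$, let $d \geq 14/\varepsilon$, and let $S \subseteq I_3^d$ be an $\varepsilon$-sparse set with $|S| \leq 2^{\varepsilon d/4}$. Then there exists a $d$-dimensional polystochastic matrix $A$ of order $3$ such that $\mathrm{supp}(A) = I_3^d \setminus S$.
   Context: $I_3^d = \{1,2,3\}^d$. A $d$-dimensional matrix of order $3$ is an array $A = (a_\alpha)_{\alpha \in I_3^d}$ of reals; a line is the set of entries obtained by fixing all but one coordinate of the index; $A$ is polystochastic if all entries are nonnegative and each line sums to $1$. $\mathrm{supp}(A) = \{\alpha : a_\alpha \neq 0\}$. For $\alpha,\beta \in I_3^d$, $\rho(\alpha,\beta)$ is the Hamming distance. For $\alpha \in I_3^d$ let $T_\alpha = \{\beta \in I_3^d : \rho(\alpha,\beta) = d\}$. For $0<\varepsilon<1$, a set $S \subseteq I_3^d$ is $\varepsilon$-sparse if (1) $\rho(\alpha,\beta) \geq \varepsilon d$ for all distinct $\alpha,\beta \in S$, and (2) for every $\alpha \in S$ there is $\gamma_\alpha \in I_3^d$ with $T_{\gamma_\alpha} \cap S = \{\alpha\}$. *)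

theory Defs
  imports "HOL-Analysis.Analysis"
begin

definition I3 :: "nat \<Rightarrow> (nat \<Rightarrow> nat) set" where
  "I3 d = {\<alpha>. (\<forall>i<d. \<alpha> i \<in> {1,2,3}) \<and> (\<forall>i\<ge>d. \<alpha> i = 0)}"

definition hamming :: "nat \<Rightarrow> (nat \<Rightarrow> nat) \<Rightarrow> (nat \<Rightarrow> nat) \<Rightarrow> nat" where
  "hamming d \<alpha> \<beta> = card {i. i < d \<and> \<alpha> i \<noteq> \<beta> i}"

text \<open>A d-dimensional matrix of order 3 is a real function on I3 d. A line through
  alpha in direction i consists of the entries alpha(i:=k), k in {1,2,3}.\<close>

definition polystochastic :: "nat \<Rightarrow> ((nat \<Rightarrow> nat) \<Rightarrow> real) \<Rightarrow> bool" where
  "polystochastic d A \<longleftrightarrow>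
     (\<forall>\<alpha>\<in>I3 d. A \<alpha> \<ge> 0) \<and>
     (\<forall>\<alpha>\<in>I3 d. \<forall>i<d. (\<Sum>k\<in>{1,2,3::nat}. A (\<alpha>(i := k))) = 1)"

definition supp :: "nat \<Rightarrow> ((nat \<Rightarrow> nat) \<Rightarrow> real) \<Rightarrow> (nat \<Rightarrow> nat) set" where
  "supp d A = {\<alpha>\<in>I3 d. A \<alpha> \<noteq> 0}"

definition T_set :: "nat \<Rightarrow> (nat \<Rightarrow> nat) \<Rightarrow> (nat \<Rightarrow> nat) set" where
  "T_set d \<alpha> = {\<beta>\<in>I3 d. hamming d \<alpha> \<beta> = d}"

definition eps_sparse :: "nat \<Rightarrow> real \<Rightarrow> (nat \<Rightarrow> nat) set \<Rightarrow> bool" where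
  "eps_sparse d \<epsilon> S \<longleftrightarrow> S \<subseteq> I3 d \<and>
     (\<forall>\<alpha>\<in>S. \<forall>\<beta>\<in>S. \<alpha> \<noteq> \<beta> \<longrightarrow> real (hamming d \<alpha> \<beta>) \<ge> \<epsilon> * d) \<and>
     (\<forall>\<alpha>\<in>S. \<exists>\<gamma>\<in>I3 d. T_set d \<gamma> \<inter> S = {\<alpha>})"

end

theory Submission imports Defs begin

definition Dm :: "nat \<Rightarrow> (nat\<Rightarrow>nat) \<Rightarrow> (nat\<Rightarrow>nat) \<Rightarrow> real" where
  "Dm d a b = (\<Prod>i<d. if b i = a i then 1 else -1/2)"
definition Gm :: "nat \<Rightarrow> (nat\<Rightarrow>nat) \<Rightarrow> (nat\<Rightarrow>nat) \<Rightarrow> (nat\<Rightarrow>nat) \<Rightarrow> real" where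
  "Gm d a c b = (\<Prod>i<d. if b i = c i then 0 else if b i = a i then 1 else -1)"

lemma prod_upd:
  fixes g :: "nat \<Rightarrow> nat \<Rightarrow> real"
  assumes "j < d"
  shows "(\<Prod>i<d. g i ((b(j:=k)) i)) = g j k * (\<Prod>i\<in>{..<d}-{j}. g i (b i))"
proof -
  have "(\<Prod>i<d. g i ((b(j:=k)) i)) = g j k * (\<Prod>i\<in>{..<d}-{j}. g i ((b(j:=k)) i))"
    using assms by (subst prod.remove[of _ j]) auto
  also have "(\<Prod>i\<in>{..<d}-{j}. g i ((b(j:=k)) i)) = (\<Prod>i\<in>{..<d}-{j}. g i (b i))"
    by (rule prod.cong) auto
  finally show ?thesis .
qed

lemma line_zero:
  fixes g :: "nat \<Rightarrow> nat \<Rightarrow> real"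
  assumes "j < d" "(\<Sum>k\<in>{1,2,3::nat}. g j k) = 0"
  shows "(\<Sum>k\<in>{1,2,3::nat}. \<Prod>i<d. g i ((b(j:=k)) i)) = 0"
proof -
  have "(\<Sum>k\<in>{1,2,3::nat}. \<Prod>i<d. g i ((b(j:=k)) i)) = (\<Sum>k\<in>{1,2,3::nat}. g j k * (\<Prod>i\<in>{..<d}-{j}. g i (b i)))"
    by (rule sum.cong) (simp_all only: prod_upd[OF assms(1)])
  also have "\<dots> = (\<Sum>k\<in>{1,2,3::nat}. g j k) * (\<Prod>i\<in>{..<d}-{j}. g i (b i))"
    by (rule sum_distrib_right[symmetric])
  finally show ?thesis using assms(2) by simp
qed

lemma Dm_line:
  assumes "a \<in> I3 d" "j < d"
  shows "(\<Sum>k\<in>{1,2,3::nat}. Dm d a (b(j:=k))) = 0"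
proof -
  have "a j \<in> {1,2,3}" using assms by (auto simp: I3_def)
  hence "(\<Sum>k\<in>{1,2,3::nat}. (\<lambda>i x. if x = a i then 1 else -1/2::real) j k) = 0" by auto
  from line_zero[where g="\<lambda>i x. if x = a i then 1 else -1/2::real", OF assms(2) this] show ?thesis unfolding Dm_def by simp
qed

lemma Gm_line:
  assumes "a \<in> I3 d" "c \<in> I3 d" "\<forall>i<d. a i \<noteq> c i" "j < d"
  shows "(\<Sum>k\<in>{1,2,3::nat}. Gm d a c (b(j:=k))) = 0"
proof -
  have "a j \<in> {1,2,3}" "c j \<in> {1,2,3}" "a j \<noteq> c j" using assms by (auto simp: I3_def)
  hence "(\<Sum>k\<in>{1,2,3::nat}. (\<lambda>i x. if x = c i then 0 else if x = a i then 1 else -1::real) j k) = 0" by auto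
  from line_zero[where g="\<lambda>i x. if x = c i then 0 else if x = a i then 1 else -1::real", OF assms(4) this] show ?thesis unfolding Gm_def by simp
qed

lemma Dm_self: "Dm d a a = 1" by (simp add: Dm_def)

lemma abs_Dm: "\<bar>Dm d a b\<bar> = (1/2) ^ hamming d a b"
proof -
  have "\<bar>Dm d a b\<bar> = (\<Prod>i<d. if b i = a i then 1 else 1/2)"
    unfolding Dm_def abs_prod by (rule prod.cong) auto
  also have "\<dots> = (1/2) ^ card ({..<d} \<inter> - {i. b i = a i})"
    by (simp add: prod.If_cases)
  also have "{..<d} \<inter> - {i. b i = a i} = {i. i < d \<and> a i \<noteq> b i}" by auto
  finally show ?thesis by (simp add: hamming_def)
qed

lemma Gm_self: "\<forall>i<d. a i \<noteq> c i \<Longrightarrow> Gm d a c a = 1"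
  by (simp add: Gm_def)

lemma Gm_zero: "i < d \<Longrightarrow> b i = c i \<Longrightarrow> Gm d a c b = 0"
  unfolding Gm_def by (intro prod_zero bexI[of _ i]) auto

lemma abs_Gm: "\<bar>Gm d a c b\<bar> \<le> 1"
  unfolding Gm_def abs_prod by (rule prod_le_1) auto

lemma hamming_sym: "hamming d a b = hamming d b a"
  unfolding hamming_def by metis

lemma hamming_tri: "hamming d a c \<le> hamming d a b + hamming d b c"
proof -
  have "{i. i < d \<and> a i \<noteq> c i} \<subseteq> {i. i < d \<and> a i \<noteq> b i} \<union> {i. i < d \<and> b i \<noteq> c i}" by auto
  hence "hamming d a c \<le> card ({i. i < d \<and> a i \<noteq> b i} \<union> {i. i < d \<and> b i \<noteq> c i})"
    unfolding hamming_def by (intro card_mono) auto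
  also have "\<dots> \<le> hamming d a b + hamming d b c" unfolding hamming_def by (rule card_Un_le)
  finally show ?thesis .
qed

lemma hamming_pos: "a \<in> I3 d \<Longrightarrow> b \<in> I3 d \<Longrightarrow> a \<noteq> b \<Longrightarrow> hamming d a b \<ge> 1"
proof -
  assume "a \<in> I3 d" "b \<in> I3 d" "a \<noteq> b"
  then obtain i where "a i \<noteq> b i" by auto
  with \<open>a \<in> I3 d\<close> \<open>b \<in> I3 d\<close> have "i < d" by (auto simp: I3_def) (metis not_le)
  hence "{i. i < d \<and> a i \<noteq> b i} \<noteq> {}" using \<open>a i \<noteq> b i\<close> by auto
  thus ?thesis unfolding hamming_def by (simp add: Suc_le_eq card_gt_0_iff)
qed

lemma hamming_full: "hamming d a c = d \<Longrightarrow> \<forall>i<d. a i \<noteq> c i"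
proof -
  assume h: "hamming d a c = d"
  have "{i. i < d \<and> a i \<noteq> c i} = {..<d}"
    using h unfolding hamming_def by (intro card_subset_eq) auto
  thus ?thesis by auto
qed

lemma finite_I3: "finite (I3 d)"
proof -
  have "I3 d \<subseteq> {f. \<forall>x. (x \<in> {..<d} \<longrightarrow> f x \<in> {1,2,3}) \<and> (x \<notin> {..<d} \<longrightarrow> f x = 0)}"
    by (auto simp: I3_def)
  moreover have "finite {f. \<forall>x. (x \<in> {..<d} \<longrightarrow> f x \<in> {1,2,3::nat}) \<and> (x \<notin> {..<d} \<longrightarrow> f x = 0)}"
    by (rule finite_set_of_finite_funs) auto
  ultimately show ?thesis by (rule finite_subset)
qed

lemma half_pow: "real n \<ge> x \<Longrightarrow> (1/2::real) ^ n \<le> 2 powr (-x)"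
proof -
  assume "real n \<ge> x"
  have "(1/2::real) ^ n = 2 powr (- real n)"
    by (simp add: powr_minus powr_realpow power_one_over inverse_eq_divide)
  also have "\<dots> \<le> 2 powr (-x)" using \<open>real n \<ge> x\<close> by (intro powr_mono) auto
  finally show ?thesis .
qed


lemma sum_bound_out:
  fixes \<delta> :: real
  assumes fin: "finite S" and sub: "S \<subseteq> I3 d"
    and sep: "\<forall>a\<in>S. \<forall>b\<in>S. a \<noteq> b \<longrightarrow> real (hamming d a b) \<ge> \<delta>"
    and b: "b \<in> I3 d" "b \<notin> S"
  shows "(\<Sum>a\<in>S. (1/2::real) ^ hamming d a b) \<le> 1/2 + card S * 2 powr (-\<delta>/2)"
proof (cases "S = {}")
  case True thus ?thesis by simp
next
  case False
  define m where "m = Min ((\<lambda>a. hamming d a b) ` S)"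
  have "m \<in> (\<lambda>a. hamming d a b) ` S" unfolding m_def using fin False by (intro Min_in) auto
  then obtain a0 where a0: "a0 \<in> S" "hamming d a0 b = m" by auto
  have mn: "hamming d a0 b \<le> hamming d a b" if "a \<in> S" for a
    using a0 fin that unfolding m_def by (auto intro: Min_le)
  have "(\<Sum>a\<in>S. (1/2::real) ^ hamming d a b) = (1/2) ^ hamming d a0 b + (\<Sum>a\<in>S-{a0}. (1/2::real) ^ hamming d a b)"
    using fin a0 by (simp add: sum.remove)
  also have "(1/2::real) ^ hamming d a0 b \<le> (1/2) ^ 1"
    using hamming_pos[of a0 d b] a0 sub b by (intro power_decreasing) auto
  also have "(\<Sum>a\<in>S-{a0}. (1/2::real) ^ hamming d a b) \<le> (\<Sum>a\<in>S-{a0}. 2 powr (-\<delta>/2))"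
  proof (rule sum_mono)
    fix a assume a: "a \<in> S - {a0}"
    have "\<delta> \<le> hamming d a a0" using sep a a0 by auto
    also have "\<dots> \<le> real (hamming d a b) + hamming d b a0" using hamming_tri[of d a a0 b] by linarith
    also have "hamming d b a0 \<le> hamming d a b" using mn[of a] a hamming_sym[of d b a0] by auto
    finally have "real (hamming d a b) \<ge> \<delta>/2" by linarith
    thus "(1/2::real) ^ hamming d a b \<le> 2 powr (-\<delta>/2)" using half_pow by simp
  qed
  also have "(\<Sum>a\<in>S-{a0}. 2 powr (-\<delta>/2)) \<le> card S * 2 powr (-\<delta>/2)"
    using fin card_mono[OF fin, of "S-{a0}"] by simp
  finally show ?thesis by simp
qed

lemma sum_bound_in:
  fixes \<delta> :: real
  assumes fin: "finite S"
    and sep: "\<forall>a\<in>S. \<forall>b\<in>S. a \<noteq> b \<longrightarrow> real (hamming d a b) \<ge> \<delta>"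
    and b: "b \<in> S"
  shows "(\<Sum>a\<in>S-{b}. (1/2::real) ^ hamming d a b) \<le> card S * 2 powr (-\<delta>)"
proof -
  have "(\<Sum>a\<in>S-{b}. (1/2::real) ^ hamming d a b) \<le> (\<Sum>a\<in>S-{b}. 2 powr (-\<delta>))"
    using sep b by (intro sum_mono half_pow) auto
  also have "\<dots> \<le> card S * 2 powr (-\<delta>)"
    using fin card_mono[OF fin, of "S-{b}"] by simp
  finally show ?thesis .
qed


theorem lemma1:
  fixes \<epsilon> :: real and d :: nat and S :: "(nat \<Rightarrow> nat) set"
  assumes "0 < \<epsilon>" and "\<epsilon> < 1"
    and "real d \<ge> 14 / \<epsilon>"
    and "eps_sparse d \<epsilon> S"
    and "real (card S) \<le> 2 powr (\<epsilon> * real d / 4)"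
  shows "\<exists>A. polystochastic d A \<and> supp d A = I3 d - S"
proof -
  define \<delta> where "\<delta> = \<epsilon> * real d"
  have d14: "\<delta> \<ge> 14" using assms(1,3) unfolding \<delta>_def by (simp add: pos_divide_le_eq mult.commute)
  have sub: "S \<subseteq> I3 d" using assms(4) by (simp add: eps_sparse_def)
  have fin: "finite S" using sub finite_I3 by (rule finite_subset)
  have sep: "\<forall>a\<in>S. \<forall>b\<in>S. a \<noteq> b \<longrightarrow> real (hamming d a b) \<ge> \<delta>"
    using assms(4) unfolding eps_sparse_def \<delta>_def by auto
  have "\<forall>a\<in>S. \<exists>c. c \<in> I3 d \<and> T_set d c \<inter> S = {a}"
    using assms(4) unfolding eps_sparse_def by blast
  then obtain g where g: "\<And>a. a \<in> S \<Longrightarrow> g a \<in> I3 d \<and> T_set d (g a) \<inter> S = {a}"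
    by metis
  have gdiff: "\<forall>i<d. a i \<noteq> g a i" if "a \<in> S" for a
  proof -
    have "a \<in> T_set d (g a)" using g[OF that] by auto
    hence "hamming d (g a) a = d" by (simp add: T_set_def)
    thus ?thesis using hamming_full by metis
  qed
  have gzero: "\<exists>i<d. b i = g a i" if "a \<in> S" "b \<in> S" "b \<noteq> a" for a b
  proof (rule ccontr)
    assume "\<not> ?thesis"
    hence "{i. i < d \<and> g a i \<noteq> b i} = {..<d}" by auto
    hence "hamming d (g a) b = d" by (simp add: hamming_def)
    hence "b \<in> T_set d (g a)" using sub that by (auto simp: T_set_def)
    thus False using g[OF that(1)] that by auto
  qed
  define e where "e a = -(1/3) * (\<Sum>a'\<in>S-{a}. Dm d a' a)" for a
  define A where "A b = 1/3 - (1/3) * (\<Sum>a\<in>S. Dm d a b) - (\<Sum>a\<in>S. e a * Gm d a (g a) b)" for b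
  have line: "(\<Sum>k\<in>{1,2,3::nat}. A (b(j:=k))) = 1" if "j < d" for b j
  proof -
    have "(\<Sum>k\<in>{1,2,3::nat}. A (b(j:=k))) = (\<Sum>k\<in>{1,2,3::nat}. 1/3)
       - (1/3) * (\<Sum>a\<in>S. \<Sum>k\<in>{1,2,3::nat}. Dm d a (b(j:=k)))
       - (\<Sum>a\<in>S. e a * (\<Sum>k\<in>{1,2,3::nat}. Gm d a (g a) (b(j:=k))))"
      unfolding A_def sum_subtractf sum_distrib_left
      by (subst (1 2) sum.swap) simp
    also have "(\<Sum>a\<in>S. \<Sum>k\<in>{1,2,3::nat}. Dm d a (b(j:=k))) = 0"
      using Dm_line sub that by (intro sum.neutral) auto
    also have "(\<Sum>a\<in>S. e a * (\<Sum>k\<in>{1,2,3::nat}. Gm d a (g a) (b(j:=k)))) = 0"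
      using Gm_line sub that g gdiff by (intro sum.neutral) auto
    finally have "(\<Sum>k\<in>{1,2,3::nat}. A (b(j:=k))) = (\<Sum>k\<in>{1,2,3::nat}. 1/3) - (1/3) * 0 - 0" .
    moreover have "(\<Sum>k\<in>{1,2,3::nat}. (1/3::real)) = 1" by simp
    ultimately show ?thesis by linarith
  qed
  have zero: "A b = 0" if b: "b \<in> S" for b
  proof -
    have "(\<Sum>a\<in>S. Dm d a b) = Dm d b b + (\<Sum>a\<in>S-{b}. Dm d a b)"
      using fin b by (simp add: sum.remove)
    moreover have "(\<Sum>a\<in>S. e a * Gm d a (g a) b) = e b * Gm d b (g b) b + (\<Sum>a\<in>S-{b}. e a * Gm d a (g a) b)"
      using fin b by (simp add: sum.remove)
    moreover have "(\<Sum>a\<in>S-{b}. e a * Gm d a (g a) b) = 0"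
      using gzero b by (intro sum.neutral) (auto intro: Gm_zero)
    moreover have "Gm d b (g b) b = 1" using gdiff[OF b] by (intro Gm_self) auto
    ultimately show ?thesis by (simp add: A_def Dm_self e_def field_simps)
  qed
  define x where "x = 2 powr (-\<delta>/4)"
  have cS: "real (card S) \<le> 2 powr (\<delta>/4)" using assms(5) by (simp add: \<delta>_def)
  have x1: "real (card S) * 2 powr (-\<delta>/2) \<le> x"
  proof -
    have "real (card S) * 2 powr (-\<delta>/2) \<le> 2 powr (\<delta>/4) * 2 powr (-\<delta>/2)"
      using cS by (intro mult_right_mono) auto
    also have "\<dots> = x" unfolding x_def by (simp add: powr_add[symmetric])
    finally show ?thesis .
  qed
  have x2: "real (card S) * (real (card S) * 2 powr (-\<delta>)) \<le> x"
  proof -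
    have "real (card S) * (real (card S) * 2 powr (-\<delta>)) \<le> 2 powr (\<delta>/4) * (2 powr (\<delta>/4) * 2 powr (-\<delta>))"
      using cS by (intro mult_mono) auto
    also have "\<dots> = 2 powr (-\<delta>/2)" by (simp add: powr_add[symmetric])
    also have "\<dots> \<le> x" unfolding x_def by (intro powr_mono) (use d14 in auto)
    finally show ?thesis .
  qed
  have x3: "x < 1/4"
  proof -
    have "x \<le> 2 powr (-7/2)" unfolding x_def by (intro powr_mono) (use d14 in auto)
    also have "\<dots> < 2 powr (-2)" by (intro powr_less_mono) auto
    also have "\<dots> = 1/4" by (simp add: powr_minus)
    finally show ?thesis .
  qed
  have pos: "A b > 0" if b: "b \<in> I3 d" "b \<notin> S" for b
  proof -
    have "\<bar>\<Sum>a\<in>S. Dm d a b\<bar> \<le> (\<Sum>a\<in>S. \<bar>Dm d a b\<bar>)" by (rule sum_abs)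
    also have "\<dots> = (\<Sum>a\<in>S. (1/2) ^ hamming d a b)" by (simp add: abs_Dm)
    also have "\<dots> \<le> 1/2 + card S * 2 powr (-\<delta>/2)" by (rule sum_bound_out[OF fin sub sep b])
    finally have h1: "\<bar>\<Sum>a\<in>S. Dm d a b\<bar> \<le> 1/2 + x" using x1 by linarith
    have eb: "\<bar>e a\<bar> \<le> (1/3) * (card S * 2 powr (-\<delta>))" if "a \<in> S" for a
    proof -
      have "\<bar>\<Sum>a'\<in>S-{a}. Dm d a' a\<bar> \<le> (\<Sum>a'\<in>S-{a}. \<bar>Dm d a' a\<bar>)" by (rule sum_abs)
      also have "\<dots> = (\<Sum>a'\<in>S-{a}. (1/2) ^ hamming d a' a)" by (simp add: abs_Dm)
      also have "\<dots> \<le> card S * 2 powr (-\<delta>)" by (rule sum_bound_in[OF fin sep that])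
      finally show ?thesis unfolding e_def by (simp add: abs_mult)
    qed
    have "\<bar>\<Sum>a\<in>S. e a * Gm d a (g a) b\<bar> \<le> (\<Sum>a\<in>S. \<bar>e a * Gm d a (g a) b\<bar>)" by (rule sum_abs)
    also have "\<dots> \<le> (\<Sum>a\<in>S. (1/3) * (card S * 2 powr (-\<delta>)))"
    proof (rule sum_mono)
      fix a assume a: "a \<in> S"
      have "\<bar>e a * Gm d a (g a) b\<bar> = \<bar>e a\<bar> * \<bar>Gm d a (g a) b\<bar>" by (simp add: abs_mult)
      also have "\<dots> \<le> \<bar>e a\<bar> * 1" by (intro mult_left_mono abs_Gm) auto
      also have "\<dots> \<le> (1/3) * (card S * 2 powr (-\<delta>))" using eb[OF a] by simp
      finally show "\<bar>e a * Gm d a (g a) b\<bar> \<le> (1/3) * (card S * 2 powr (-\<delta>))" .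
    qed
    also have "\<dots> = (1/3) * (card S * (card S * 2 powr (-\<delta>)))" by simp
    also have "\<dots> \<le> (1/3) * x" using x2 by simp
    finally have h2: "\<bar>\<Sum>a\<in>S. e a * Gm d a (g a) b\<bar> \<le> (1/3) * x" .
    show ?thesis unfolding A_def using h1 h2 x3 by linarith
  qed
  have "polystochastic d A"
    unfolding polystochastic_def
  proof (intro conjI ballI allI impI)
    fix b assume "b \<in> I3 d"
    thus "A b \<ge> 0" using zero pos by (cases "b \<in> S") (auto intro: less_imp_le)
  next
    fix b i assume "i < d" thus "(\<Sum>k\<in>{1,2,3::nat}. A (b(i := k))) = 1" by (rule line)
  qed
  moreover have "supp d A = I3 d - S"
    unfolding supp_def using zero pos sub by force
  ultimately show ?thesis by blast
qed

end
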